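(* Let $N\ge2$ and let $Y$ be a real symmetric $N\times N$ matrix. If $\|Y-I\|_F^2\le1$, then $Y$ is scaled diagonally dominant. If $\|Y-I\|_F^2\le\frac{2}{N+1}$, then $Y$ is diagonally dominant.
   Context: A symmetric matrix $X$ is diagonally dominant if $X(i,i)\ge\sum_{j\ne i}|X(i,j)|$ for all $i$; it is scaled diagonally dominant if $X=DYD$ for some positive diagonal matrix $D$ and some diagonally dominant $Y$. *)

theory Defs
  imports "HOL-Analysis.Analysis"
begin

definition symmetric_matrix :: "real ^'n^'n \<Rightarrow> bool" where
  "symmetric_matrix X \<longleftrightarrow> transpose X = X"

definition diag_dominant :: "real ^'n^'n \<Rightarrow> bool" where
  "diag_dominant X \<longleftrightarrow> symmetric_matrix X \<and>
     (\<forall>i. X $ i $ i \<ge> (\<Sum>j\<in>UNIV - {i}. \<bar>X $ i $ j\<bar>))"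

definition diag_matrix :: "('n \<Rightarrow> real) \<Rightarrow> real ^'n^'n" where
  "diag_matrix d = (\<chi> i j. if i = j then d i else 0)"

definition scaled_diag_dominant :: "real ^'n^'n \<Rightarrow> bool" where
  "scaled_diag_dominant X \<longleftrightarrow>
     (\<exists>d Y. (\<forall>i. d i > 0) \<and> diag_dominant Y \<and>
            X = diag_matrix d ** Y ** diag_matrix d)"

definition frob_norm_sq :: "real ^'n^'n \<Rightarrow> real" where
  "frob_norm_sq A = (\<Sum>i\<in>UNIV. \<Sum>j\<in>UNIV. (A $ i $ j)^2)"

end

theory Submission
  imports Defs
begin

lemma two_point_form:
  fixes K :: "'a \<Rightarrow> 'a \<Rightarrow> real"
  assumes fin: "finite J" and a: "a \<in> J" and b: "b \<in> J" and ab: "a \<noteq> b"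
    and sym: "K b a = K a b"
  shows "(\<Sum>i\<in>J. \<Sum>j\<in>J. (if i = a then p else if i = b then q else 0) * K i j *
            (if j = a then p else if j = b then q else 0)) = p^2 * K a a + 2*p*q*K a b + q^2 * K b b"
proof -
  let ?x = "\<lambda>i. if i = a then p else if i = b then q else 0"
  have r: "\<And>g. (\<Sum>i\<in>J. ?x i * g i) = p * g a + q * g b"
  proof -
    fix g :: "'a \<Rightarrow> real"
    have "(\<Sum>i\<in>J. ?x i * g i) = (\<Sum>i\<in>{a,b}. ?x i * g i)"
      by (rule sum.mono_neutral_right) (use fin a b in auto)
    then show "(\<Sum>i\<in>J. ?x i * g i) = p * g a + q * g b" using ab by simp
  qed
  have "(\<Sum>i\<in>J. \<Sum>j\<in>J. ?x i * K i j * ?x j) = (\<Sum>i\<in>J. ?x i * (\<Sum>j\<in>J. ?x j * K i j))"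
    by (simp add: sum_distrib_left mult_ac)
  also have "\<dots> = (\<Sum>i\<in>J. ?x i * (p * K i a + q * K i b))"
    using r by simp
  also have "\<dots> = p * (p * K a a + q * K a b) + q * (p * K b a + q * K b b)"
    using r by simp
  finally show ?thesis using sym by (simp add: power2_eq_square algebra_simps)
qed

definition qf :: "'a set \<Rightarrow> ('a \<Rightarrow> 'a \<Rightarrow> real) \<Rightarrow> ('a \<Rightarrow> real) \<Rightarrow> real" where
  "qf J K x = (\<Sum>i\<in>J. \<Sum>j\<in>J. x i * K i j * x j)"

lemma diag_nonneg:
  assumes "finite J" "n \<in> J" "\<forall>x. 0 \<le> qf J K x"
  shows "0 \<le> K n n"
proof -
  have inner: "(\<Sum>j\<in>J. (if i = n then 1 else 0) * K i j * (if j = n then 1 else 0)) =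
     (if i = n then K n n else 0)" for i
  proof -
    have "(\<Sum>j\<in>J. (if i = n then 1 else 0) * K i j * (if j = n then 1 else 0)) =
       (\<Sum>j\<in>{n}. (if i = n then 1 else 0) * K i j * (if j = n then 1 else (0::real)))"
      by (rule sum.mono_neutral_right) (use assms(1,2) in auto)
    then show ?thesis by simp
  qed
  have "qf J K (\<lambda>i. if i = n then 1 else 0) = K n n"
    unfolding qf_def inner using assms(1,2) by simp
  then show ?thesis using assms(3) by metis
qed

lemma zero_diag_row:
  assumes fin: "finite J" and n: "n \<in> J" and j: "j \<in> J" and nj: "j \<noteq> n"
    and sym: "K n j = K j n" and psd: "\<forall>x. 0 \<le> qf J K x" and z: "K n n = 0"
    and neg: "K j n \<le> 0"
  shows "K j n = 0"
proof (rule ccontr)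
  assume "K j n \<noteq> 0"
  hence kn: "K j n < 0" using neg by simp
  have djj: "0 \<le> K j j" using diag_nonneg[OF fin j psd] .
  define t where "t = - K j n / (K j j + 1)"
  have tpos: "t > 0" unfolding t_def using kn djj by (intro divide_pos_pos) auto
  have "qf J K (\<lambda>i. if i = j then t else if i = n then 1 else 0) = t^2 * K j j + 2*t*1*K j n + 1^2 * K n n"
    unfolding qf_def by (rule two_point_form[OF fin j n nj sym])
  moreover have "0 \<le> qf J K (\<lambda>i. if i = j then t else if i = n then 1 else 0)" using psd by blast
  ultimately have "0 \<le> t^2 * K j j + 2*t*1*K j n + 1^2 * K n n" by simp
  hence "0 \<le> t^2 * K j j + 2*t*K j n" using z by simp
  hence "0 \<le> t * (t * K j j + 2 * K j n)" by (simp add: power2_eq_square algebra_simps)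
  hence h: "0 \<le> t * K j j + 2 * K j n" using tpos by (simp add: zero_le_mult_iff)
  have "t * K j j + 2 * K j n = K j n * (K j j + 2) / (K j j + 1)"
    unfolding t_def using djj by (simp add: field_simps)
  also have "\<dots> < 0" using kn djj by (intro divide_neg_pos mult_neg_pos) auto
  finally show False using h by simp
qed

lemma zmat_pos_vec:
  "finite J \<Longrightarrow> (\<forall>i\<in>J. \<forall>j\<in>J. K i j = K j i) \<Longrightarrow> (\<forall>i\<in>J. \<forall>j\<in>J. i \<noteq> j \<longrightarrow> K i j \<le> 0)
   \<Longrightarrow> (\<forall>x. 0 \<le> qf J K x) \<Longrightarrow> \<exists>w. (\<forall>i\<in>J. 0 < w i) \<and> (\<forall>i\<in>J. 0 \<le> (\<Sum>j\<in>J. K i j * w j))"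
proof (induction J arbitrary: K rule: finite_induct)
  case empty
  show ?case by auto
next
  case (insert n J)
  note fin = insert.hyps(1) and nJ = insert.hyps(2)
  note sym = insert.prems(1) and neg = insert.prems(2) and psd = insert.prems(3)
  have finI: "finite (insert n J)" using fin by simp
  have d0: "0 \<le> K n n" using diag_nonneg[OF finI _ psd] by simp
  have kz: "K j n = 0" if "K n n = 0" "j \<in> J" for j
  proof -
    have jI: "j \<in> insert n J" and nI: "n \<in> insert n J" and jn: "j \<noteq> n" using that nJ by auto
    show ?thesis
      by (rule zero_diag_row[OF finI nI jI jn sym[rule_format, OF nI jI] psd that(1) neg[rule_format, OF jI nI jn]])
  qed
  have kK: "K n j = K j n" if "j \<in> J" for j
  proof -
    have jI: "j \<in> insert n J" and nI: "n \<in> insert n J" using that by auto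
    show ?thesis using sym[rule_format, OF nI jI] .
  qed
  define S where "S = (\<lambda>i j. K i j - K i n * K j n / K n n)"
  have symS: "\<forall>i\<in>J. \<forall>j\<in>J. S i j = S j i"
  proof (intro ballI)
    fix i j assume "i \<in> J" "j \<in> J"
    hence "K i j = K j i" using sym by simp
    thus "S i j = S j i" unfolding S_def by (simp add: mult.commute)
  qed
  have negS: "\<forall>i\<in>J. \<forall>j\<in>J. i \<noteq> j \<longrightarrow> S i j \<le> 0"
  proof (intro ballI impI)
    fix i j assume ij: "i \<in> J" "j \<in> J" "i \<noteq> j"
    have iI: "i \<in> insert n J" and jI: "j \<in> insert n J" and nI: "n \<in> insert n J"
      and "i \<noteq> n" "j \<noteq> n" using ij nJ by auto
    have "K i j \<le> 0" using neg[rule_format, OF iI jI ij(3)] .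
    moreover have "K i n \<le> 0" "K j n \<le> 0" using neg[rule_format, OF iI nI \<open>i \<noteq> n\<close>] neg[rule_format, OF jI nI \<open>j \<noteq> n\<close>] by auto
    hence "0 \<le> K i n * K j n / K n n" using d0 by (simp add: zero_le_mult_iff)
    ultimately show "S i j \<le> 0" unfolding S_def by simp
  qed
  have psdS: "\<forall>x. 0 \<le> qf J S x"
  proof
    fix x :: "_ \<Rightarrow> real"
    define c where "c = (\<Sum>j\<in>J. K j n * x j)"
    define x' where "x' = x(n := - c / K n n)"
    have xJ: "x' j = x j" if "j \<in> J" for j using that nJ unfolding x'_def by auto
    have e1: "qf (insert n J) K x' = K n n * (x' n)^2 + 2 * x' n * c + qf J K x"
    proof -
      have "qf (insert n J) K x' = (\<Sum>j\<in>insert n J. x' n * K n j * x' j)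
            + (\<Sum>i\<in>J. \<Sum>j\<in>insert n J. x' i * K i j * x' j)"
        unfolding qf_def using fin nJ by (simp add: sum.insert)
      also have "(\<Sum>j\<in>insert n J. x' n * K n j * x' j) = x' n * K n n * x' n + x' n * c"
      proof -
        have "(\<Sum>j\<in>insert n J. x' n * K n j * x' j) = x' n * K n n * x' n + (\<Sum>j\<in>J. x' n * K n j * x' j)"
          using fin nJ by (simp add: sum.insert)
        also have "(\<Sum>j\<in>J. x' n * K n j * x' j) = (\<Sum>j\<in>J. x' n * (K j n * x j))"
          using kK xJ by (intro sum.cong) auto
        also have "\<dots> = x' n * c" unfolding c_def by (simp add: sum_distrib_left)
        finally show ?thesis .
      qed
      also have "(\<Sum>i\<in>J. \<Sum>j\<in>insert n J. x' i * K i j * x' j)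
           = (\<Sum>i\<in>J. x i * K i n * x' n + (\<Sum>j\<in>J. x i * K i j * x j))"
        using fin nJ xJ by (intro sum.cong) (simp_all add: sum.insert)
      also have "\<dots> = x' n * c + qf J K x"
        unfolding qf_def c_def by (simp add: sum.distrib sum_distrib_left sum_distrib_right mult_ac)
      finally show ?thesis by (simp add: power2_eq_square)
    qed
    have e2: "qf J S x = qf J K x - c^2 / K n n"
    proof -
      have "qf J S x = qf J K x - (\<Sum>i\<in>J. \<Sum>j\<in>J. (K i n * x i) * (K j n * x j)) / K n n"
        unfolding qf_def S_def
        by (simp add: algebra_simps sum_subtractf sum_divide_distrib)
      also have "(\<Sum>i\<in>J. \<Sum>j\<in>J. (K i n * x i) * (K j n * x j)) = c^2"
        unfolding c_def power2_eq_square by (simp add: sum_product mult_ac)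
      finally show ?thesis .
    qed
    have e3: "K n n * (x' n)^2 + 2 * x' n * c = - (c^2 / K n n)"
      unfolding x'_def by (cases "K n n = 0") (simp_all add: field_simps power2_eq_square)
    show "0 \<le> qf J S x" using psd[rule_format, of x'] e1 e2 e3 by simp
  qed
  obtain w' where wpos: "\<forall>i\<in>J. 0 < w' i" and wrow: "\<forall>i\<in>J. 0 \<le> (\<Sum>j\<in>J. S i j * w' j)"
    using insert.IH[OF symS negS psdS] by blast
  define c where "c = (\<Sum>j\<in>J. K j n * w' j)"
  have terms: "K j n * w' j \<le> 0" if "j \<in> J" for j
  proof -
    have jI: "j \<in> insert n J" and nI: "n \<in> insert n J" and jn: "j \<noteq> n" using that nJ by auto
    have "K j n \<le> 0" using neg[rule_format, OF jI nI jn] .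
    moreover have "0 \<le> w' j" using wpos that by (simp add: less_imp_le)
    ultimately show ?thesis by (simp add: mult_nonpos_nonneg)
  qed
  have cle: "c \<le> 0" unfolding c_def using terms by (simp add: sum_nonpos)
  have c0: "K j n = 0" if "c = 0" "j \<in> J" for j
  proof -
    have "(\<Sum>j\<in>J. - (K j n * w' j)) = 0" using that unfolding c_def by (simp add: sum_negf)
    hence "\<forall>j\<in>J. - (K j n * w' j) = 0" using fin terms by (subst (asm) sum_nonneg_eq_0_iff) auto
    hence "K j n * w' j = 0" using that(2) by auto
    moreover have "w' j \<noteq> 0" using wpos that(2) by auto
    ultimately show ?thesis by simp
  qed
  define \<delta> where "\<delta> = (if c = 0 then 1 else (0::real))"
  define w where "w = w'(n := - c / K n n + \<delta>)"
  have wJ: "w j = w' j" if "j \<in> J" for j using that nJ unfolding w_def by auto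
  have wn: "w n = - c / K n n + \<delta>" unfolding w_def by simp
  have posn: "0 < w n"
  proof (cases "c = 0")
    case True thus ?thesis using wn \<delta>_def by simp
  next
    case False
    hence "c < 0" using cle by simp
    moreover have "K n n \<noteq> 0" using False kz unfolding c_def by auto
    ultimately have "0 < - c / K n n" using d0 by (simp add: divide_neg_pos)
    thus ?thesis using wn \<delta>_def False by simp
  qed
  have rown: "0 \<le> (\<Sum>j\<in>insert n J. K n j * w j)"
  proof -
    have "(\<Sum>j\<in>insert n J. K n j * w j) = K n n * w n + c"
    proof -
      have "(\<Sum>j\<in>insert n J. K n j * w j) = K n n * w n + (\<Sum>j\<in>J. K n j * w j)"
        using fin nJ by (simp add: sum.insert)
      also have "(\<Sum>j\<in>J. K n j * w j) = c" unfolding c_def using kK wJ by (intro sum.cong) auto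
      finally show ?thesis .
    qed
    also have "\<dots> = (if K n n = 0 then c else K n n * \<delta>)" unfolding wn by (cases "K n n = 0") (simp_all add: algebra_simps)
    also have "\<dots> \<ge> 0" using kz d0 \<delta>_def c_def by (auto simp: c_def)
    finally show ?thesis by simp
  qed
  have rowi: "0 \<le> (\<Sum>j\<in>insert n J. K i j * w j)" if iJ: "i \<in> J" for i
  proof -
    have "(\<Sum>j\<in>insert n J. K i j * w j) = K i n * w n + (\<Sum>j\<in>J. K i j * w' j)"
      using fin nJ wJ by (simp add: sum.insert)
    also have "(\<Sum>j\<in>J. K i j * w' j) = (\<Sum>j\<in>J. S i j * w' j) + K i n * c / K n n"
      unfolding S_def c_def by (simp add: algebra_simps sum_subtractf sum_divide_distrib sum_distrib_left)
    finally have "(\<Sum>j\<in>insert n J. K i j * w j) = K i n * \<delta> + (\<Sum>j\<in>J. S i j * w' j)"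
      using wn by (simp add: field_simps)
    moreover have "K i n * \<delta> = 0" using c0 iJ \<delta>_def by auto
    ultimately show ?thesis using wrow iJ by simp
  qed
  show ?case
    using posn wpos wJ rown rowi by (intro exI[of _ w]) auto
qed

lemma qf_lower:
  fixes E :: "'a \<Rightarrow> 'a \<Rightarrow> real"
  assumes fin: "finite J" and F: "(\<Sum>i\<in>J. \<Sum>j\<in>J. (E i j)^2) \<le> 1"
  shows "- (\<Sum>i\<in>J. (x i)^2) \<le> qf J E x"
proof -
  define S where "S = (\<Sum>i\<in>J. (x i)^2)"
  have S0: "0 \<le> S" unfolding S_def by (simp add: sum_nonneg)
  have trm: "- 2 * S * (x i * E i j * x j) \<le> (E i j)^2 * S^2 + (x i)^2 * (x j)^2" for i j
  proof -
    have "0 \<le> (E i j * S + x i * x j)^2" by simp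
    thus ?thesis by (simp add: power2_eq_square algebra_simps)
  qed
  have xx: "(\<Sum>i\<in>J. \<Sum>j\<in>J. (x i)^2 * (x j)^2) = S * S"
    unfolding S_def sum_product ..
  have "- 2 * S * qf J E x = (\<Sum>i\<in>J. \<Sum>j\<in>J. - 2 * S * (x i * E i j * x j))"
    unfolding qf_def by (simp add: sum_distrib_left)
  also have "\<dots> \<le> (\<Sum>i\<in>J. \<Sum>j\<in>J. (E i j)^2 * S^2 + (x i)^2 * (x j)^2)"
    by (intro sum_mono trm)
  also have "\<dots> = (\<Sum>i\<in>J. \<Sum>j\<in>J. (E i j)^2) * S^2 + S * S"
    using xx by (simp add: sum.distrib sum_distrib_right)
  also have "\<dots> \<le> 1 * S^2 + S * S"
    using F by (intro add_right_mono mult_right_mono) auto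
  finally have h: "- 2 * S * qf J E x \<le> 2 * S * S" by (simp add: power2_eq_square)
  show ?thesis
  proof (cases "S = 0")
    case True
    hence "\<forall>i\<in>J. x i = 0" unfolding S_def using fin by (simp add: sum_nonneg_eq_0_iff)
    hence "qf J E x = 0" unfolding qf_def by simp
    thus ?thesis using True S_def by simp
  next
    case False
    hence "0 < S" using S0 by simp
    hence pos2: "0 < 2 * S" by simp
    have "(2 * S) * (- qf J E x) \<le> (2 * S) * S" using h by simp
    hence "- qf J E x \<le> S" using mult_le_cancel_left_pos[OF pos2] by blast
    thus ?thesis unfolding S_def by simp
  qed
qed

lemma sym_entry:
  assumes "symmetric_matrix Y" shows "Y $ i $ j = Y $ j $ i"
proof -
  have "transpose Y $ i $ j = Y $ i $ j" using assms unfolding symmetric_matrix_def by simp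
  thus ?thesis unfolding transpose_def by simp
qed

lemma diag_mult_left: "(diag_matrix d ** A) $ i $ j = d i * A $ i $ j"
proof -
  have "(diag_matrix d ** A) $ i $ j = (\<Sum>k\<in>UNIV. (if i = k then d i else 0) * A $ k $ j)"
    by (simp add: matrix_matrix_mult_def diag_matrix_def)
  also have "\<dots> = (\<Sum>k\<in>UNIV. if i = k then d i * A $ k $ j else 0)"
    by (intro sum.cong) auto
  also have "\<dots> = d i * A $ i $ j" by simp
  finally show ?thesis .
qed

lemma diag_mult_right: "(A ** diag_matrix d) $ i $ j = A $ i $ j * d j"
proof -
  have "(A ** diag_matrix d) $ i $ j = (\<Sum>k\<in>UNIV. A $ i $ k * (if k = j then d k else 0))"
    by (simp add: matrix_matrix_mult_def diag_matrix_def)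
  also have "\<dots> = (\<Sum>k\<in>UNIV. if k = j then A $ i $ k * d k else 0)"
    by (intro sum.cong) auto
  also have "\<dots> = A $ i $ j * d j" by simp
  finally show ?thesis .
qed

lemma part1:
  fixes Y :: "real ^'n::finite^'n"
  assumes sym: "symmetric_matrix Y" and F: "frob_norm_sq (Y - mat 1) \<le> 1"
  shows "scaled_diag_dominant Y"
proof -
  define K where "K = (\<lambda>i j. if i = j then Y $ i $ i else - \<bar>Y $ i $ j\<bar>)"
  define E where "E = (\<lambda>i j. K i j - (if i = j then 1 else (0::real)))"
  have EF: "(\<Sum>i\<in>UNIV. \<Sum>j\<in>UNIV. (E i j)^2) = frob_norm_sq (Y - mat 1)"
    unfolding frob_norm_sq_def E_def K_def
    by (intro sum.cong refl) (simp add: mat_def)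
  have qK: "qf UNIV K x = (\<Sum>i\<in>UNIV. (x i)^2) + qf UNIV E x" for x
  proof -
    have "qf UNIV K x = (\<Sum>i\<in>UNIV. \<Sum>j\<in>UNIV. x i * E i j * x j + x i * (if i = j then 1 else 0) * x j)"
      unfolding qf_def E_def by (intro sum.cong refl) (simp add: algebra_simps)
    also have "\<dots> = qf UNIV E x + (\<Sum>i\<in>UNIV. \<Sum>j\<in>UNIV. x i * (if i = j then 1 else 0) * x j)"
      unfolding qf_def by (simp only: sum.distrib)
    also have "(\<Sum>i\<in>UNIV. \<Sum>j\<in>UNIV. x i * (if i = j then 1 else 0) * x j) = (\<Sum>i\<in>UNIV. (x i)^2)"
    proof (intro sum.cong refl)
      fix i
      have "(\<Sum>j\<in>UNIV. x i * (if i = j then 1 else 0) * x j) = (\<Sum>j\<in>UNIV. if i = j then x i * x j else 0)"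
        by (intro sum.cong) auto
      also have "\<dots> = (x i)^2" by (simp add: power2_eq_square)
      finally show "(\<Sum>j\<in>UNIV. x i * (if i = j then 1 else 0) * x j) = (x i)^2" .
    qed
    finally show ?thesis by simp
  qed
  have psd: "\<forall>x. 0 \<le> qf UNIV K x"
  proof
    fix x
    have "- (\<Sum>i\<in>UNIV. (x i)^2) \<le> qf UNIV E x"
      by (rule qf_lower) (use EF F in auto)
    thus "0 \<le> qf UNIV K x" using qK[of x] by simp
  qed
  have symK: "\<forall>i\<in>UNIV. \<forall>j\<in>UNIV. K i j = K j i"
    unfolding K_def using sym_entry[OF sym] by auto
  have negK: "\<forall>i\<in>UNIV. \<forall>j\<in>UNIV. i \<noteq> j \<longrightarrow> K i j \<le> 0"
    unfolding K_def by auto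
  obtain w where wpos: "\<forall>i\<in>UNIV. 0 < w i" and wrow: "\<forall>i\<in>UNIV. 0 \<le> (\<Sum>j\<in>UNIV. K i j * w j)"
    using zmat_pos_vec[OF finite symK negK psd] by blast
  define d where "d = (\<lambda>i. 1 / w i)"
  define Z :: "real^'n^'n" where "Z = (\<chi> i j. Y $ i $ j * w i * w j)"
  have row: "(\<Sum>j\<in>UNIV - {i}. \<bar>Y $ i $ j\<bar> * w j) \<le> Y $ i $ i * w i" for i
  proof -
    have "(\<Sum>j\<in>UNIV. K i j * w j) = K i i * w i + (\<Sum>j\<in>UNIV - {i}. K i j * w j)"
      by (simp add: sum.remove)
    also have "(\<Sum>j\<in>UNIV - {i}. K i j * w j) = - (\<Sum>j\<in>UNIV - {i}. \<bar>Y $ i $ j\<bar> * w j)"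
      unfolding K_def by (simp add: sum_negf[symmetric])
    finally show ?thesis using wrow[rule_format, of i] by (simp add: K_def)
  qed
  have dd: "diag_dominant Z"
    unfolding diag_dominant_def
  proof (intro conjI allI)
    show "symmetric_matrix Z"
      unfolding symmetric_matrix_def Z_def transpose_def
      by (simp add: vec_eq_iff sym_entry[OF sym] mult_ac)
  next
    fix i
    have wi: "0 < w i" using wpos by simp
    have "(\<Sum>j\<in>UNIV - {i}. \<bar>Z $ i $ j\<bar>) = w i * (\<Sum>j\<in>UNIV - {i}. \<bar>Y $ i $ j\<bar> * w j)"
      unfolding Z_def sum_distrib_left using wpos by (intro sum.cong refl) (simp add: abs_mult less_imp_le)
    also have "\<dots> \<le> w i * (Y $ i $ i * w i)"
      using row[of i] wi by (simp add: mult_left_mono)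
    also have "\<dots> = Z $ i $ i" unfolding Z_def by (simp add: mult_ac)
    finally show "(\<Sum>j\<in>UNIV - {i}. \<bar>Z $ i $ j\<bar>) \<le> Z $ i $ i" .
  qed
  have eq: "Y = diag_matrix d ** Z ** diag_matrix d"
  proof -
    have "Y $ i $ j = (diag_matrix d ** Z ** diag_matrix d) $ i $ j" for i j
    proof -
      have "w i \<noteq> 0" "w j \<noteq> 0" using wpos by (metis UNIV_I less_irrefl)+
      thus ?thesis unfolding diag_mult_left diag_mult_right Z_def d_def by simp
    qed
    thus ?thesis by (simp add: vec_eq_iff)
  qed
  show ?thesis unfolding scaled_diag_dominant_def
    using wpos dd eq unfolding d_def by (intro exI[of _ d] exI[of _ Z]) (auto simp: d_def)
qed


lemma part2:
  fixes Y :: "real ^'n::finite^'n"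
  assumes N2: "CARD('n) \<ge> 2" and sym: "symmetric_matrix Y"
    and F: "frob_norm_sq (Y - mat 1) \<le> 2 / (real CARD('n) + 1)"
  shows "diag_dominant Y"
  unfolding diag_dominant_def
proof (intro conjI allI)
  show "symmetric_matrix Y" by (rule sym)
next
  fix i :: 'n
  define A where "A = UNIV - {i}"
  define N where "N = real CARD('n)"
  define a where "a = 1 - Y $ i $ i"
  define s where "s = (\<Sum>j\<in>A. \<bar>Y $ i $ j\<bar>)"
  define q where "q = (\<Sum>j\<in>A. (Y $ i $ j)^2)"
  define Fr where "Fr = frob_norm_sq (Y - mat 1)"
  define R where "R = (\<lambda>k. \<Sum>l\<in>UNIV. ((Y - mat 1) $ k $ l)^2)"
  have N2': "2 \<le> N" unfolding N_def using N2 by simp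
  have cardA: "real (card A) = N - 1" unfolding A_def N_def
    by (simp add: card_Diff_singleton of_nat_diff)
  have FR: "Fr = R i + (\<Sum>k\<in>A. R k)"
    unfolding Fr_def frob_norm_sq_def R_def A_def by (simp add: sum.remove)
  have Ri: "R i = a^2 + q"
  proof -
    have "R i = ((Y - mat 1) $ i $ i)^2 + (\<Sum>l\<in>A. ((Y - mat 1) $ i $ l)^2)"
      unfolding R_def A_def by (simp add: sum.remove)
    also have "(\<Sum>l\<in>A. ((Y - mat 1) $ i $ l)^2) = q"
      unfolding q_def A_def by (intro sum.cong refl) (auto simp: mat_def)
    also have "((Y - mat 1) $ i $ i)^2 = a^2" unfolding a_def
      by (simp add: mat_def power2_commute)
    finally show ?thesis .
  qed
  have Rk: "(Y $ i $ k)^2 \<le> R k" if "k \<in> A" for k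
  proof -
    have "((Y - mat 1) $ k $ i)^2 \<le> R k"
      unfolding R_def by (rule member_le_sum) auto
    moreover have "(Y - mat 1) $ k $ i = Y $ i $ k" using that sym_entry[OF sym, of k i]
      unfolding A_def by (auto simp: mat_def)
    ultimately show ?thesis by simp
  qed
  have "q \<le> (\<Sum>k\<in>A. R k)" unfolding q_def by (intro sum_mono Rk)
  hence Fge: "a^2 + 2 * q \<le> Fr" using FR Ri by simp
  have CS: "s^2 \<le> (N - 1) * q"
  proof -
    have "(\<Sum>j\<in>A. \<bar>Y $ i $ j\<bar> * 1)^2 \<le> (\<Sum>j\<in>A. (\<bar>Y $ i $ j\<bar>)^2) * (\<Sum>j\<in>A. 1^2)"
      by (rule Cauchy_Schwarz_ineq_sum)
    thus ?thesis unfolding s_def q_def using cardA by (simp add: mult.commute)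
  qed
  have q0: "0 \<le> q" unfolding q_def by (simp add: sum_nonneg)
  have FF: "Fr \<le> 2 / (N + 1)" using F unfolding Fr_def N_def .
  have "s \<le> 1 - a"
  proof (rule ccontr)
    assume "\<not> s \<le> 1 - a"
    hence sa: "1 - a < s" by linarith
    show False
    proof (cases "1 - a < 0")
      case True
      hence a1: "1 < a" by simp
      have "1 < a^2" unfolding power2_eq_square by (rule less_1_mult[OF a1 a1])
      moreover have "2 / (N + 1) \<le> 1"
      proof -
        have "0 < N + 1" using N2' by simp
        thus ?thesis using N2' by (subst divide_le_eq_1_pos) auto
      qed
      ultimately show False using Fge FF q0 by linarith
    next
      case False
      hence nn: "0 \<le> 1 - a" by simp
      have "(1 - a)^2 < s^2" by (rule power_strict_mono[OF sa nn]) simp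
      hence lt: "(1 - a)^2 < (N - 1) * q" using CS by linarith
      have "Fr * (N + 1) \<le> 2" using FF N2' by (subst (asm) pos_le_divide_eq) auto
      hence "(N - 1) * (Fr * (N + 1)) \<le> (N - 1) * 2" using N2' by (intro mult_left_mono) auto
      hence "(N - 1) * (N + 1) * Fr \<le> 2 * (N - 1)" by (simp add: mult_ac)
      moreover have "(N - 1) * (N + 1) * (a^2 + 2 * q) \<le> (N - 1) * (N + 1) * Fr"
        using Fge N2' by (intro mult_left_mono) auto
      moreover have "(N - 1) * (N + 1) * (a^2 + 2 * q) > (N^2 - 1) * a^2 + 2 * (N + 1) * (1 - a)^2"
      proof -
        have "2 * (N + 1) * (1 - a)^2 < 2 * (N + 1) * ((N - 1) * q)"
          using lt N2' by (intro mult_strict_left_mono) auto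
        thus ?thesis by (simp add: power2_eq_square algebra_simps)
      qed
      moreover have "(N^2 - 1) * a^2 + 2 * (N + 1) * (1 - a)^2 = ((N + 1) * a - 2)^2 + 2 * (N - 1)"
        by (simp add: power2_eq_square algebra_simps)
      moreover have "0 \<le> ((N + 1) * a - 2)^2" by simp
      ultimately show False by linarith
    qed
  qed
  thus "(\<Sum>j\<in>UNIV - {i}. \<bar>Y $ i $ j\<bar>) \<le> Y $ i $ i"
    unfolding s_def A_def a_def by simp
qed

theorem lemmaB2:
  fixes Y :: "real ^'n::finite^'n"
  assumes "CARD('n) \<ge> 2"
    and "symmetric_matrix Y"
  shows "(frob_norm_sq (Y - mat 1) \<le> 1 \<longrightarrow> scaled_diag_dominant Y)
       \<and> (frob_norm_sq (Y - mat 1) \<le> 2 / (real CARD('n) + 1) \<longrightarrow> diag_dominant Y)"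
  using part1[OF assms(2)] part2[OF assms] by blast

end
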